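(* Assume Assumption (A). Let $U\subseteq\mathbb{C}$ be compact. Then there exist $N=N(U)\in\mathbb{N}$ and $C>0$ such that for all $n\ge N$ and all $\lambda\in U$, the matrix $D-\lambda I$ is invertible and $$\big\|\ell_0+P(D-\lambda I)^{-1}D\mathbf 1-\varepsilon_\lambda\big\|\le\frac1{\sqrt n}\Big(\frac Cn\Big)^n,$$ where $\|\cdot\|$ is the supremum norm on $[-1,0]$.
   Context: For $\lambda\in\mathbb{C}$, $\varepsilon_\lambda(\theta)=e^{\lambda\theta}$, $\theta\in[-1,0]$. For each $n\in\mathbb{N}$ a mesh $-1\le\theta_n<\dots<\theta_1<\theta_0=0$ is given (the nodes may depend on $n$), with Lagrange polynomials $\ell_j(\theta)=\prod_{0\le m\le n,\,m\neq j}\frac{\theta-\theta_m}{\theta_j-\theta_m}$, $j=0,\dots,n$. $D$ is the $n\times n$ matrix with entries $D_{ij}=\ell_j'(\theta_i)$, $i,j=1,\dots,n$; $\mathbf 1=(1,\dots,1)^T\in\mathbb{R}^n$; $I$ is the identity matrix. For $y\in\mathbb{C}^n$, $Py=\sum_{j=1}^n y_j\ell_j$. Assumption (A): with the reduced Lagrange polynomials $\tilde\ell_j(\theta)=\prod_{1\le m\le n,\,m\neq j}\frac{\theta-\theta_m}{\theta_j-\theta_m}$, $j=1,\dots,n$, the Lebesgue constants $\tilde\Lambda_n=\max_{\theta\in[-1,0]}\sum_{j=1}^n|\tilde\ell_j(\theta)|$ satisfy $\tilde\Lambda_n/n\to0$ as $n\to\infty$. *)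

theory Defs
  imports "HOL-Analysis.Analysis"
begin

definition is_mesh_family :: "(nat \<Rightarrow> nat \<Rightarrow> real) \<Rightarrow> bool" where
  "is_mesh_family th \<longleftrightarrow> (\<forall>n. th n 0 = 0 \<and> -1 \<le> th n n \<and>
     (\<forall>j<n. th n (Suc j) < th n j))"

definition lagr :: "(nat \<Rightarrow> nat \<Rightarrow> real) \<Rightarrow> nat \<Rightarrow> nat \<Rightarrow> real \<Rightarrow> real" where
  "lagr th n j t = (\<Prod>m\<in>{0..n} - {j}. (t - th n m) / (th n j - th n m))"

definition rlagr :: "(nat \<Rightarrow> nat \<Rightarrow> real) \<Rightarrow> nat \<Rightarrow> nat \<Rightarrow> real \<Rightarrow> real" where
  "rlagr th n j t = (\<Prod>m\<in>{1..n} - {j}. (t - th n m) / (th n j - th n m))"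

definition rlebesgue :: "(nat \<Rightarrow> nat \<Rightarrow> real) \<Rightarrow> nat \<Rightarrow> real" where
  "rlebesgue th n = (SUP t\<in>{-1..0}. \<Sum>j=1..n. \<bar>rlagr th n j t\<bar>)"

definition Dmat :: "(nat \<Rightarrow> nat \<Rightarrow> real) \<Rightarrow> nat \<Rightarrow> nat \<Rightarrow> nat \<Rightarrow> complex" where
  "Dmat th n i j = complex_of_real (deriv (lagr th n j) (th n i))"

text \<open>n x n matrices as functions on indices 1..n: E is a two-sided inverse of A.\<close>
definition is_inverse :: "nat \<Rightarrow> (nat \<Rightarrow> nat \<Rightarrow> complex) \<Rightarrow> (nat \<Rightarrow> nat \<Rightarrow> complex) \<Rightarrow> bool" where
  "is_inverse n A E \<longleftrightarrow>
     (\<forall>i\<in>{1..n}. \<forall>k\<in>{1..n}.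
        (\<Sum>j=1..n. A i j * E j k) = (if i = k then 1 else 0) \<and>
        (\<Sum>j=1..n. E i j * A j k) = (if i = k then 1 else 0))"

definition invertible_nmat :: "nat \<Rightarrow> (nat \<Rightarrow> nat \<Rightarrow> complex) \<Rightarrow> bool" where
  "invertible_nmat n A \<longleftrightarrow> (\<exists>E. is_inverse n A E)"

definition DmI :: "(nat \<Rightarrow> nat \<Rightarrow> real) \<Rightarrow> nat \<Rightarrow> complex \<Rightarrow> nat \<Rightarrow> nat \<Rightarrow> complex" where
  "DmI th n lam i j = Dmat th n i j - (if i = j then lam else 0)"

definition yvec :: "(nat \<Rightarrow> nat \<Rightarrow> real) \<Rightarrow> nat \<Rightarrow> (nat \<Rightarrow> nat \<Rightarrow> complex) \<Rightarrow> nat \<Rightarrow> complex" where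
  "yvec th n E i = (\<Sum>k=1..n. E i k * (\<Sum>m=1..n. Dmat th n k m))"

definition err_fun :: "(nat \<Rightarrow> nat \<Rightarrow> real) \<Rightarrow> nat \<Rightarrow> complex \<Rightarrow> (nat \<Rightarrow> complex) \<Rightarrow> real \<Rightarrow> complex" where
  "err_fun th n lam y t = complex_of_real (lagr th n 0 t)
     + (\<Sum>j=1..n. y j * complex_of_real (lagr th n j t)) - exp (lam * complex_of_real t)"

definition supnorm :: "(real \<Rightarrow> complex) \<Rightarrow> real" where
  "supnorm f = (SUP t\<in>{-1..0}. cmod (f t))"

end

theory Submission
  imports Defs "HOL-Computational_Algebra.Polynomial" "Jordan_Normal_Form.Determinant"
begin


definition lpoly :: "nat set \<Rightarrow> (nat \<Rightarrow> real) \<Rightarrow> nat \<Rightarrow> complex poly" where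
  "lpoly S x j = Polynomial.smult (of_real (1 / (\<Prod>k\<in>S-{j}. x j - x k))) (\<Prod>k\<in>S-{j}. [:- of_real (x k), 1:])"

lemma poly_lpoly:
  "poly (lpoly S x j) (of_real t) = of_real (\<Prod>k\<in>S-{j}. (t - x k) / (x j - x k))"
  by (simp add: lpoly_def poly_prod prod_dividef of_real_prod)

lemma degree_lpoly:
  assumes "finite S" "j \<in> S"
  shows "degree (lpoly S x j) \<le> card S - 1"
proof -
  have "degree (\<Prod>k\<in>S-{j}. [:- (of_real (x k)::complex), 1:]) = (\<Sum>k\<in>S-{j}. degree [:- (of_real (x k)::complex), 1:])"
    by (rule degree_prod_sum_eq) auto
  also have "\<dots> = card (S - {j})" by simp
  also have "\<dots> \<le> card S - 1" using assms
    by (cases "j \<in> S") auto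
  finally show ?thesis unfolding lpoly_def
    using degree_smult_le order_trans by blast
qed

lemma coeff_lpoly:
  assumes "finite S" "j \<in> S"
  shows "coeff (lpoly S x j) (card S - 1) = of_real (1 / (\<Prod>k\<in>S-{j}. x j - x k))"
proof -
  let ?P = "\<Prod>k\<in>S-{j}. [:- (of_real (x k)::complex), 1:]"
  have dg: "degree ?P = card S - 1"
    using assms by (subst degree_prod_sum_eq) auto
  have "lead_coeff ?P = 1" by (simp add: lead_coeff_prod)
  with dg have "coeff ?P (card S - 1) = 1" by simp
  then show ?thesis by (simp add: lpoly_def)
qed

lemma lpoly_node:
  assumes "finite S" "inj_on x S" "i \<in> S" "j \<in> S"
  shows "poly (lpoly S x j) (of_real (x i)) = (if i = j then 1 else 0)"
proof (cases "i = j")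
  case True
  have "(\<Prod>k\<in>S-{j}. (x j - x k) / (x j - x k)) = 1"
  proof (rule prod.neutral, intro ballI)
    fix k assume "k \<in> S - {j}"
    then have "x j \<noteq> x k" using assms inj_on_def by (metis DiffD1 DiffD2 singletonI)
    then show "(x j - x k) / (x j - x k) = 1" by simp
  qed
  then show ?thesis using True by (simp add: poly_lpoly)
next
  case False
  have "(\<Prod>k\<in>S-{j}. (x i - x k) / (x j - x k)) = 0"
    using assms False by (intro prod_zero) auto
  then show ?thesis using False by (simp add: poly_lpoly)
qed

lemma lagrange_interp:
  fixes r :: "complex poly" and S :: "nat set"
  assumes "finite S" "inj_on x S" "degree r < card S"
  shows "r = (\<Sum>j\<in>S. Polynomial.smult (poly r (of_real (x j))) (lpoly S x j))"
proof (rule poly_eqI_degree[where A = "(\<lambda>j. of_real (x j)) ` S"])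
  show "card ((\<lambda>j. complex_of_real (x j)) ` S) > degree r"
    using assms by (subst card_image) (auto simp: inj_on_def)
  have "degree (\<Sum>j\<in>S. Polynomial.smult (poly r (of_real (x j))) (lpoly S x j)) \<le> card (S::nat set) - 1"
    using assms(1) by (intro degree_sum_le) (metis order_trans[OF degree_smult_le] degree_lpoly)+
  then show "card ((\<lambda>j. complex_of_real (x j)) ` S) > degree (\<Sum>j\<in>S. Polynomial.smult (poly r (of_real (x j))) (lpoly S x j))"
    using assms by (subst card_image) (auto simp: inj_on_def)
  fix z assume "z \<in> (\<lambda>j. complex_of_real (x j)) ` S"
  then obtain i where i: "i \<in> S" "z = of_real (x i)" by auto
  have "poly (\<Sum>j\<in>S. Polynomial.smult (poly r (of_real (x j))) (lpoly S x j)) z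
      = (\<Sum>j\<in>S. poly r (of_real (x j)) * (if i = j then 1 else 0))"
    using i assms by (simp add: poly_sum lpoly_node)
  also have "\<dots> = poly r z" using i assms(1) by (simp add: if_distrib cong: if_cong)
  finally show "poly r z = poly (\<Sum>j\<in>S. Polynomial.smult (poly r (of_real (x j))) (lpoly S x j)) z" by simp
qed

lemma lagrange_coeff:
  fixes r :: "complex poly" and S :: "nat set"
  assumes "finite S" "inj_on x S" "degree r < card S"
  shows "coeff r (card S - 1) = (\<Sum>j\<in>S. poly r (of_real (x j)) * of_real (1 / (\<Prod>k\<in>S-{j}. x j - x k)))"
proof -
  have "coeff r (card S - 1) = coeff (\<Sum>j\<in>S. Polynomial.smult (poly r (of_real (x j))) (lpoly S x j)) (card S - 1)"
    using lagrange_interp[OF assms] by simp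
  also have "\<dots> = (\<Sum>j\<in>S. poly r (of_real (x j)) * of_real (1 / (\<Prod>k\<in>S-{j}. x j - x k)))"
    unfolding coeff_sum using assms(1) by (intro sum.cong refl) (simp only: coeff_smult coeff_lpoly)
  finally show ?thesis .
qed



fun cheb :: "nat \<Rightarrow> real poly" where
  "cheb 0 = 1"
| "cheb (Suc 0) = [:0,1:]"
| "cheb (Suc (Suc n)) = Polynomial.smult 2 (pCons 0 (cheb (Suc n))) - cheb n"

lemma cheb_cos: "poly (cheb n) (cos x) = cos (real n * x)"
proof (induction n rule: cheb.induct)
  case (3 n)
  define a where "a = real (Suc n) * x"
  have h: "cos (a + x) = 2 * cos x * cos a - cos (a - x)" by (simp add: cos_add cos_diff)
  have e1: "real (Suc (Suc n)) * x = a + x" by (simp add: a_def algebra_simps)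
  have e2: "real n * x = a - x" by (simp add: a_def algebra_simps)
  have "poly (cheb (Suc (Suc n))) (cos x) = 2 * cos x * poly (cheb (Suc n)) (cos x) - poly (cheb n) (cos x)"
    by simp
  also have "\<dots> = 2 * cos x * cos a - cos (a - x)"
  proof -
    have i1: "poly (cheb (Suc n)) (cos x) = cos a" using 3(1) unfolding a_def .
    have i2: "poly (cheb n) (cos x) = cos (a - x)" using 3(2) unfolding e2 .
    show ?thesis unfolding i1 i2 ..
  qed
  also have "\<dots> = cos (real (Suc (Suc n)) * x)" using h e1 by simp
  finally show ?case .
qed auto

lemma cheb_deg: "degree (cheb n) = n \<and> coeff (cheb n) n = (if n = 0 then 1 else 2 ^ (n - 1))"
proof (induction n rule: cheb.induct)
  case (3 n)
  have dS: "degree (cheb (Suc n)) = Suc n" using 3(1) by blast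
  have cS: "coeff (cheb (Suc n)) (Suc n) = 2 ^ n" using 3(1) by simp
  have d0: "degree (cheb n) = n" using 3(2) by blast
  have nz: "cheb (Suc n) \<noteq> 0"
  proof
    assume "cheb (Suc n) = 0"
    then have "coeff (cheb (Suc n)) (Suc n) = 0" by simp
    then show False using cS by simp
  qed
  have d1: "degree (Polynomial.smult 2 (pCons 0 (cheb (Suc n)))) = Suc (Suc n)"
    using dS nz by simp
  have deg: "degree (Polynomial.smult 2 (pCons 0 (cheb (Suc n))) - cheb n) = Suc (Suc n)"
  proof -
    have "degree (- cheb n) < degree (Polynomial.smult 2 (pCons 0 (cheb (Suc n))))" using d1 d0 by simp
    then have "degree (Polynomial.smult 2 (pCons 0 (cheb (Suc n))) + - cheb n) = degree (Polynomial.smult 2 (pCons 0 (cheb (Suc n))))"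
      by (rule degree_add_eq_left)
    then show ?thesis using d1 by simp
  qed
  have c0: "coeff (cheb n) (Suc (Suc n)) = 0" using d0 by (intro coeff_eq_0) simp
  have cf: "coeff (Polynomial.smult 2 (pCons 0 (cheb (Suc n))) - cheb n) (Suc (Suc n)) = 2 ^ Suc n"
    using cS c0 by simp
  show ?case using deg cf by (simp only: cheb.simps) simp
qed auto

definition cphi :: "nat \<Rightarrow> nat \<Rightarrow> real" where
  "cphi N k = pi * real (Suc (2*k)) / (2 * real N)"

definition cnode :: "nat \<Rightarrow> nat \<Rightarrow> real" where
  "cnode N k = (cos (cphi N k) - 1) / 2"

definition chm :: "nat \<Rightarrow> real poly" where
  "chm N = Polynomial.smult (1 / 2 ^ (2*N - 1)) (cheb N \<circ>\<^sub>p [:1,2:])"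

lemma cphi_range: assumes "k < N" shows "0 < cphi N k" "cphi N k < pi"
proof -
  have N0: "real N > 0" using assms by simp
  have "Suc (2*k) < 2*N" using assms by simp
  then have h: "real (Suc (2*k)) < 2 * real N" by (metis of_nat_less_iff of_nat_mult of_nat_numeral)
  have "pi * real (Suc (2*k)) < pi * (2 * real N)" using h by (intro mult_strict_left_mono) simp_all
  then show "cphi N k < pi" unfolding cphi_def using N0 by (simp add: divide_less_eq)
  show "0 < cphi N k" using N0 unfolding cphi_def by simp
qed

lemma cnode_inj: "inj_on (cnode N) {..<N}"
proof (rule inj_onI)
  fix a b assume a: "a \<in> {..<N}" and b: "b \<in> {..<N}" and e: "cnode N a = cnode N b"
  then have c: "cos (cphi N a) = cos (cphi N b)" unfolding cnode_def by simp
  have ab: "cphi N a = cphi N b"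
  proof (rule cos_inj_pi[OF _ _ _ _ c])
    show "0 \<le> cphi N a" "cphi N a \<le> pi" "0 \<le> cphi N b" "cphi N b \<le> pi"
      using cphi_range[of a N] cphi_range[of b N] a b by auto
  qed
  have N0: "real N > 0" using a by simp
  have "pi * real (Suc (2*a)) = pi * real (Suc (2*b))"
    using ab N0 unfolding cphi_def by (simp add: divide_cancel_right)
  then have "real (Suc (2*a)) = real (Suc (2*b))" by simp
  then show "a = b" by (simp only: of_nat_eq_iff)
qed

lemma cnode_range: "cnode N k \<in> {-1..0}"
proof -
  have h: "cnode N k * 2 = cos (cphi N k) - 1" by (simp add: cnode_def)
  have "-1 \<le> cnode N k \<and> cnode N k \<le> 0"
    using h cos_ge_minus_one[of "cphi N k"] cos_le_one[of "cphi N k"] by linarith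
  then show ?thesis by simp
qed

lemma poly_chm: "poly (chm N) t = poly (cheb N) (2*t+1) / 2 ^ (2*N - 1)"
  by (simp add: chm_def poly_pcompose algebra_simps)

lemma cheb_N_cphi: assumes "k < N" shows "real N * cphi N k = pi * real (Suc (2 * k)) / 2"
  using assms unfolding cphi_def by (simp add: field_simps)

lemma cos_N_cphi: assumes "k < N" shows "cos (real N * cphi N k) = 0"
proof -
  have "cos (real N * cphi N k) = cos (pi * real (Suc (2 * k)) / 2)" by (simp only: cheb_N_cphi[OF assms])
  then show ?thesis by (simp only: cos_pi_eq_zero)
qed

lemma chm_root: assumes "k < N" shows "poly (chm N) (cnode N k) = 0"
proof -
  have "2 * cnode N k + 1 = cos (cphi N k)" by (simp add: cnode_def field_simps)
  then show ?thesis using cos_N_cphi[OF assms]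
    by (simp add: poly_chm cheb_cos)
qed

lemma chm_deg: assumes "N \<ge> 1" shows "degree (chm N) = N" "coeff (chm N) N = 1"
proof -
  have dc: "degree (cheb N) = N" "coeff (cheb N) N = 2 ^ (N-1)" using cheb_deg[of N] assms by auto
  have dp: "degree (cheb N \<circ>\<^sub>p [:1,2:]) = N" using dc by (simp add: degree_pcompose)
  show "degree (chm N) = N" using dp by (simp add: chm_def)
  have "lead_coeff (cheb N \<circ>\<^sub>p [:1,2:]) = 2 ^ (N-1) * 2 ^ N"
    using dc by (subst lead_coeff_comp) auto
  also have "\<dots> = 2 ^ (N - 1 + N)" by (simp add: power_add)
  also have "(2::real) ^ (N - 1 + N) = 2 ^ (2*N - 1)"
  proof -
    have e: "N - 1 + N = 2*N - 1" using assms by simp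
    show ?thesis by (simp only: e)
  qed
  finally have "lead_coeff (cheb N \<circ>\<^sub>p [:1,2:]) = 2 ^ (2*N - 1)" .
  then show "coeff (chm N) N = 1" using dp by (simp add: chm_def)
qed

lemma chm_prod: assumes "N \<ge> 1"
  shows "(\<Prod>k<N. [:- cnode N k, 1:]) = chm N"
proof (rule poly_eqI_degree_lead_coeff[where n = N and A = "cnode N ` {..<N}"])
  have dg: "degree (\<Prod>k<N. [:- cnode N k, 1:]) = N"
    by (subst degree_prod_sum_eq) auto
  show "coeff (\<Prod>k<N. [:- cnode N k, 1:]) N = coeff (chm N) N"
    using chm_deg[OF assms] dg lead_coeff_prod[of "\<lambda>k. [:- cnode N k, 1:]" "{..<N}"] by simp
  show "N \<le> card (cnode N ` {..<N})" using cnode_inj by (simp add: card_image)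
  show "degree (\<Prod>k<N. [:- cnode N k, 1:]) \<le> N" using dg by simp
  show "degree (chm N) \<le> N" using chm_deg[OF assms] by simp
  fix z assume "z \<in> cnode N ` {..<N}"
  then obtain k where k: "k < N" "z = cnode N k" by auto
  have "poly (\<Prod>k<N. [:- cnode N k, 1:]) z = 0"
    using k by (auto simp: poly_prod intro!: prod_zero)
  then show "poly (\<Prod>k<N. [:- cnode N k, 1:]) z = poly (chm N) z"
    using chm_root k by simp
qed

lemma cheb_bound: assumes "\<bar>x\<bar> \<le> 1" shows "\<bar>poly (cheb N) x\<bar> \<le> 1"
proof -
  have "x = cos (arccos x)" using assms by simp
  then have "poly (cheb N) x = cos (real N * arccos x)" using cheb_cos by metis
  then show ?thesis by simp
qed

lemma chm_bound: assumes "t \<in> {-1..0}" shows "\<bar>poly (chm N) t\<bar> \<le> 1 / 2 ^ (2*N - 1)"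
proof -
  have "\<bar>poly (cheb N) (2*t+1)\<bar> \<le> 1" using assms by (intro cheb_bound) auto
  then show ?thesis by (simp add: poly_chm divide_right_mono)
qed

lemma cheb_deriv: assumes "0 < x" "x < pi"
  shows "\<bar>poly (pderiv (cheb N)) (cos x)\<bar> * sin x = real N * \<bar>sin (real N * x)\<bar>"
proof -
  have d1: "((\<lambda>x. poly (cheb N) (cos x)) has_real_derivative poly (pderiv (cheb N)) (cos x) * (- sin x)) (at x)"
    by (rule DERIV_chain2[OF poly_DERIV DERIV_cos])
  have d2: "((\<lambda>x. poly (cheb N) (cos x)) has_real_derivative - sin (real N * x) * real N) (at x)"
    unfolding cheb_cos by (auto intro!: derivative_eq_intros)
  have "poly (pderiv (cheb N)) (cos x) * (- sin x) = - sin (real N * x) * real N"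
    using DERIV_unique[OF d1 d2] .
  then have "poly (pderiv (cheb N)) (cos x) * sin x = real N * sin (real N * x)" by (simp add: algebra_simps)
  then have "\<bar>poly (pderiv (cheb N)) (cos x) * sin x\<bar> = real N * \<bar>sin (real N * x)\<bar>" by (simp add: abs_mult)
  moreover have "sin x > 0" using assms by (intro sin_gt_zero)
  ultimately show ?thesis by (simp add: abs_mult)
qed

lemma cnode_prod_bound:
  assumes "j < N"
  shows "\<bar>\<Prod>k\<in>{..<N}-{j}. cnode N j - cnode N k\<bar> \<ge> real N / 4 ^ (N - 1)"
proof -
  have N1: "N \<ge> 1" using assms by simp
  define Q where "Q = (\<Prod>k\<in>{..<N}-{j}. [:- cnode N k, 1:])"
  have split: "(\<Prod>k<N. [:- cnode N k, 1:]) = [:- cnode N j, 1:] * Q"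
    unfolding Q_def using assms by (subst prod.remove[of _ j]) auto
  have cq: "chm N = [:- cnode N j, 1:] * Q" using split chm_prod[OF N1] by simp
  have "pderiv (chm N) = [:- cnode N j, 1:] * pderiv Q + Q * pderiv [:- cnode N j, 1:]"
    unfolding cq by (rule pderiv_mult)
  then have q: "poly Q (cnode N j) = poly (pderiv (chm N)) (cnode N j)" by (simp add: pderiv_pCons)
  have "pderiv (chm N) = Polynomial.smult (1 / 2 ^ (2*N - 1)) (pderiv (cheb N) \<circ>\<^sub>p [:1,2:] * [:2:])"
    by (simp add: chm_def pderiv_smult pderiv_pcompose pderiv_pCons)
  moreover have "2 * cnode N j + 1 = cos (cphi N j)" by (simp add: cnode_def field_simps)
  ultimately have q2: "poly (pderiv (chm N)) (cnode N j) = poly (pderiv (cheb N)) (cos (cphi N j)) * 2 / 2 ^ (2*N - 1)"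
    by (simp add: poly_pcompose algebra_simps)
  have sx: "0 < sin (cphi N j)" "sin (cphi N j) \<le> 1" using cphi_range[OF assms] by (auto intro: sin_gt_zero)
  have cz: "cos (real N * cphi N j) = 0" using cos_N_cphi[OF assms] .
  have "(sin (real N * cphi N j))^2 = 1" using sin_cos_squared_add[of "real N * cphi N j"] cz by simp
  then have "sin (real N * cphi N j) = 1 \<or> sin (real N * cphi N j) = -1" by (simp add: power2_eq_1_iff)
  then have s1: "\<bar>sin (real N * cphi N j)\<bar> = 1" by auto
  have "\<bar>poly (pderiv (cheb N)) (cos (cphi N j))\<bar> * sin (cphi N j) = real N"
    using cheb_deriv[OF cphi_range[OF assms]] s1 by simp
  then have dge: "\<bar>poly (pderiv (cheb N)) (cos (cphi N j))\<bar> \<ge> real N"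
    using sx by (metis abs_ge_zero mult_left_le)
  have pw: "(2::real) ^ (2*N - 1) = 2 * 4 ^ (N - 1)"
  proof -
    obtain m where m: "N = Suc m" using N1 by (cases N) auto
    have "(2::real) ^ (2*N - 1) = 2 * 2 ^ (2*m)" using m by simp
    also have "(2::real) ^ (2*m) = 4 ^ m" by (simp add: power_mult)
    finally show ?thesis using m by simp
  qed
  have "(\<Prod>k\<in>{..<N}-{j}. cnode N j - cnode N k) = poly Q (cnode N j)"
    unfolding Q_def by (simp add: poly_prod)
  then have "\<bar>\<Prod>k\<in>{..<N}-{j}. cnode N j - cnode N k\<bar> = \<bar>poly (pderiv (cheb N)) (cos (cphi N j))\<bar> / 4 ^ (N - 1)"
    using q q2 pw by (simp add: abs_mult)
  then show ?thesis using dge by (simp add: divide_right_mono)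
qed

lemma cheb_monic_exists:
  assumes "N \<ge> 1"
  shows "\<exists>M::complex poly. degree M = N \<and> coeff M N = 1 \<and>
           (\<forall>t\<in>{-1..0}. cmod (poly M (of_real t)) \<le> 1 / 2 ^ (2*N - 1))"
proof (intro exI conjI ballI)
  define M where "M = (\<Prod>k<N. [:- complex_of_real (cnode N k), 1:])"
  have dg: "degree M = N" unfolding M_def by (subst degree_prod_sum_eq) auto
  then show "degree M = N" .
  show "coeff M N = 1" using dg lead_coeff_prod[of "\<lambda>k. [:- complex_of_real (cnode N k), 1:]" "{..<N}"]
    by (simp add: M_def)
  fix t :: real assume t: "t \<in> {-1..0}"
  have "poly M (of_real t) = of_real (poly (\<Prod>k<N. [:- cnode N k, 1:]) t)"
    unfolding M_def by (simp add: poly_prod)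
  also have "\<dots> = of_real (poly (chm N) t)" using chm_prod[OF assms] by simp
  finally show "cmod (poly M (of_real t)) \<le> 1 / 2 ^ (2*N - 1)" using chm_bound[OF t] by simp
qed

lemma lead_bound:
  fixes r :: "complex poly"
  assumes N1: "N \<ge> 1" and dr: "degree r \<le> N - 1"
    and B: "\<forall>t\<in>{-1..0}. cmod (poly r (of_real t)) \<le> B"
  shows "cmod (coeff r (N - 1)) \<le> 4 ^ (N - 1) * B"
proof -
  have cS: "card {..<N} = N" by simp
  have "coeff r (card {..<N} - 1) = (\<Sum>j\<in>{..<N}. poly r (of_real (cnode N j)) * of_real (1 / (\<Prod>k\<in>{..<N}-{j}. cnode N j - cnode N k)))"
    using N1 dr by (intro lagrange_coeff cnode_inj) auto
  then have "cmod (coeff r (N - 1)) \<le> (\<Sum>j\<in>{..<N}. cmod (poly r (of_real (cnode N j))) * \<bar>1 / (\<Prod>k\<in>{..<N}-{j}. cnode N j - cnode N k)\<bar>)"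
    by (metis (no_types, lifting) cS norm_mult norm_of_real norm_sum sum.cong)
  also have "\<dots> \<le> (\<Sum>j\<in>{..<N}. B * (4 ^ (N - 1) / real N))"
  proof (rule sum_mono)
    fix j assume j: "j \<in> {..<N}"
    have b: "cmod (poly r (of_real (cnode N j))) \<le> B" using B cnode_range by auto
    have B0: "0 \<le> B" using B by (metis atLeastAtMost_iff le_minus_one_simps(1) norm_ge_zero order_trans order_refl neg_le_0_iff_le zero_le_one)
    have P: "real N / 4 ^ (N - 1) \<le> \<bar>\<Prod>k\<in>{..<N}-{j}. cnode N j - cnode N k\<bar>"
      using cnode_prod_bound[of j N] j by simp
    have P0: "0 < real N / 4 ^ (N - 1)" using N1 by simp
    have "\<bar>1 / (\<Prod>k\<in>{..<N}-{j}. cnode N j - cnode N k)\<bar> = 1 / \<bar>\<Prod>k\<in>{..<N}-{j}. cnode N j - cnode N k\<bar>"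
      by (simp add: abs_divide)
    also have "\<dots> \<le> 1 / (real N / 4 ^ (N - 1))"
    proof (rule divide_left_mono[OF P])
      have "0 < \<bar>\<Prod>k\<in>{..<N}-{j}. cnode N j - cnode N k\<bar>" using P P0 by linarith
      then show "0 < \<bar>\<Prod>k\<in>{..<N}-{j}. cnode N j - cnode N k\<bar> * (real N / 4 ^ (N - 1))"
        using P0 by (rule mult_pos_pos)
    qed simp
    also have "\<dots> = 4 ^ (N - 1) / real N" by simp
    finally show "cmod (poly r (of_real (cnode N j))) * \<bar>1 / (\<Prod>k\<in>{..<N}-{j}. cnode N j - cnode N k)\<bar> \<le> B * (4 ^ (N - 1) / real N)"
      using b B0 by (intro mult_mono) auto
  qed
  also have "\<dots> = 4 ^ (N - 1) * B" using N1 by simp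
  finally show ?thesis .
qed



lemma weighted_int:
  fixes f :: "real \<Rightarrow> complex"
  assumes der: "\<And>s. s \<in> {-1..0} \<Longrightarrow> (f has_vector_derivative f' s) (at s)"
    and f0: "f 0 = 0"
    and bnd: "\<And>s. s \<in> {-1..0} \<Longrightarrow> cmod (f' s) \<le> A * exp (- \<kappa> * s)"
    and k: "\<kappa> > 0" and t: "t \<in> {-1..0}"
  shows "cmod (f t) \<le> A / \<kappa> * exp (- \<kappa> * t)"
proof (cases "t = 0")
  case True
  have "cmod (f' 0) \<le> A" using bnd[of 0] by simp
  then have "0 \<le> A" using norm_ge_zero order_trans by blast
  then show ?thesis using True f0 k by simp
next
  case False
  then have tlt: "t < 0" using t by simp
  define \<phi> where "\<phi> s = - (A / \<kappa>) * exp (- \<kappa> * s)" for s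
  have cont: "continuous_on {t..0} f"
  proof (rule continuous_at_imp_continuous_on, intro ballI)
    fix s assume "s \<in> {t..0}"
    then have "s \<in> {-1..0}" using t by auto
    then show "isCont f s" using der has_vector_derivative_continuous by blast
  qed
  have phider: "(\<phi> has_vector_derivative A * exp (- \<kappa> * s)) (at s)" for s
  proof -
    have "(\<phi> has_real_derivative A * exp (- \<kappa> * s)) (at s)"
      unfolding \<phi>_def using k by (auto intro!: derivative_eq_intros)
    then show ?thesis by (simp add: has_real_derivative_iff_has_vector_derivative)
  qed
  have phicont: "continuous_on {t..0} \<phi>" unfolding \<phi>_def by (intro continuous_intros)
  have "norm (f 0 - f t) \<le> \<phi> 0 - \<phi> t"
  proof (rule differentiable_bound_general[OF tlt cont phicont])
    fix s assume "t < s" "s < 0"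
    then have s: "s \<in> {-1..0}" using t by auto
    show "(f has_vector_derivative f' s) (at s)" using der[OF s] .
    show "(\<phi> has_vector_derivative A * exp (- \<kappa> * s)) (at s)" by (rule phider)
    show "norm (f' s) \<le> A * exp (- \<kappa> * s)" using bnd[OF s] by simp
  qed
  also have "\<phi> 0 - \<phi> t = A / \<kappa> * exp (- \<kappa> * t) - A / \<kappa>" unfolding \<phi>_def by simp
  finally have h: "cmod (f t) \<le> A / \<kappa> * exp (- \<kappa> * t) - A / \<kappa>" using f0 by (simp add: norm_minus_commute)
  have "cmod (f' 0) \<le> A" using bnd[of 0] by simp
  then have "0 \<le> A" using norm_ge_zero order_trans by blast
  then have "0 \<le> A / \<kappa>" using k by simp
  then show ?thesis using h by linarith
qed

definition tpoly :: "complex \<Rightarrow> nat \<Rightarrow> complex poly" where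
  "tpoly lam n = (\<Sum>k<n. monom (lam ^ k / fact k) k)"

lemma poly_tpoly: "poly (tpoly lam n) z = (\<Sum>k<n. (lam * z) ^ k / fact k)"
  by (simp add: tpoly_def poly_sum poly_monom power_mult_distrib)

lemma degree_tpoly: "degree (tpoly lam n) \<le> n - 1"
  unfolding tpoly_def
  by (rule degree_sum_le) (auto intro: order_trans[OF degree_monom_le])

lemma coeff_tpoly: "n \<ge> 1 \<Longrightarrow> coeff (tpoly lam n) (n - 1) = lam ^ (n - 1) / fact (n - 1)"
proof -
  assume n: "n \<ge> 1"
  have "coeff (tpoly lam n) (n - 1) = (\<Sum>k<n. if k = n - 1 then lam ^ k / fact k else 0)"
    unfolding tpoly_def coeff_sum by (intro sum.cong refl) (auto simp: coeff_monom)
  also have "\<dots> = lam ^ (n - 1) / fact (n - 1)" using n by (simp add: sum.delta)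
  finally show ?thesis .
qed

lemma taylor_exp:
  fixes z :: complex
  assumes "cmod z \<le> R" "n \<ge> 1"
  shows "cmod (exp z - (\<Sum>k<n. z ^ k / fact k)) \<le> exp R * R ^ n / fact (n - 1)"
proof -
  have R0: "0 \<le> R" using assms(1) norm_ge_zero order_trans by blast
  have "cmod (exp z - (\<Sum>i\<le>n-1. exp 0 * (z - 0) ^ i / fact i)) \<le> exp R * cmod (z - 0) ^ Suc (n-1) / fact (n-1)"
  proof (rule field_Taylor[where S = "cball 0 R" and f = "\<lambda>i. exp"])
    show "convex (cball (0::complex) R)" by simp
    fix i x assume "x \<in> cball (0::complex) R"
    show "(exp has_field_derivative exp x) (at x within cball 0 R)"
      by (intro DERIV_subset[OF DERIV_exp]) auto
  next
    fix x :: complex assume "x \<in> cball 0 R"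
    then have "cmod x \<le> R" by simp
    then show "cmod (exp x) \<le> exp R" using norm_exp[of x] by (meson exp_le_cancel_iff order_trans)
  next
    show "(0::complex) \<in> cball 0 R" using R0 by simp
    show "z \<in> cball 0 R" using assms by simp
  qed
  moreover have "{..n-1} = {..<n}" using assms(2) by auto
  moreover have "Suc (n - 1) = n" using assms(2) by simp
  ultimately have "cmod (exp z - (\<Sum>k<n. z ^ k / fact k)) \<le> exp R * cmod z ^ n / fact (n-1)" by simp
  also have "\<dots> \<le> exp R * R ^ n / fact (n - 1)"
    using assms(1) by (intro divide_right_mono mult_left_mono power_mono) auto
  finally show ?thesis .
qed



locale rnodes =
  fixes n :: nat and x :: "nat \<Rightarrow> real" and Lam :: real
  assumes n1: "n \<ge> 1"
    and xinj: "inj_on x {1..n}"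
    and xr: "\<And>j. j \<in> {1..n} \<Longrightarrow> x j \<in> {-1..0}"
    and leb: "\<And>t. t \<in> {-1..0} \<Longrightarrow> (\<Sum>j\<in>{1..n}. \<bar>\<Prod>k\<in>{1..n}-{j}. (t - x k) / (x j - x k)\<bar>) \<le> Lam"
begin

definition Iop :: "(real \<Rightarrow> complex) \<Rightarrow> real \<Rightarrow> complex" where
  "Iop f t = (\<Sum>j\<in>{1..n}. f (x j) * of_real (\<Prod>k\<in>{1..n}-{j}. (t - x k) / (x j - x k)))"

lemma Lam_nonneg: "0 \<le> Lam"
proof -
  have a: "(\<Sum>j\<in>{1..n}. \<bar>\<Prod>k\<in>{1..n}-{j}. (0 - x k) / (x j - x k)\<bar>) \<le> Lam" by (rule leb) simp
  have b: "0 \<le> (\<Sum>j\<in>{1..n}. \<bar>\<Prod>k\<in>{1..n}-{j}. (0 - x k) / (x j - x k)\<bar>)" by (rule sum_nonneg) simp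
  show ?thesis using a b by linarith
qed

lemma card_nodes: "card {1..n} = n" by simp

lemma I_poly:
  fixes r :: "complex poly"
  assumes "degree r < n"
  shows "Iop (\<lambda>s. poly r (of_real s)) t = poly r (of_real t)"
proof -
  have "r = (\<Sum>j\<in>{1..n}. Polynomial.smult (poly r (of_real (x j))) (lpoly {1..n} x j))"
    using assms xinj by (intro lagrange_interp) auto
  then have "poly r (of_real t) = poly (\<Sum>j\<in>{1..n}. Polynomial.smult (poly r (of_real (x j))) (lpoly {1..n} x j)) (of_real t)"
    by simp
  also have "\<dots> = Iop (\<lambda>s. poly r (of_real s)) t"
    unfolding Iop_def by (simp add: poly_sum poly_lpoly del: of_real_prod of_real_divide)
  finally show ?thesis by simp
qed

lemma I_diff: "Iop f t - Iop g t = Iop (\<lambda>s. f s - g s) t"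
  unfolding Iop_def by (simp add: sum_subtractf algebra_simps)

lemma I_bound:
  assumes t: "t \<in> {-1..0}" and B: "\<And>j. j \<in> {1..n} \<Longrightarrow> cmod (f (x j)) \<le> B"
  shows "cmod (Iop f t) \<le> Lam * B"
proof -
  have "cmod (f (x 1)) \<le> B" using B n1 by simp
  then have B0: "0 \<le> B" by (rule order_trans[OF norm_ge_zero])
  have "cmod (Iop f t) \<le> (\<Sum>j\<in>{1..n}. cmod (f (x j)) * \<bar>\<Prod>k\<in>{1..n}-{j}. (t - x k) / (x j - x k)\<bar>)"
    unfolding Iop_def by (rule order_trans[OF norm_sum]) (simp add: norm_mult del: of_real_prod of_real_divide)
  also have "\<dots> \<le> (\<Sum>j\<in>{1..n}. B * \<bar>\<Prod>k\<in>{1..n}-{j}. (t - x k) / (x j - x k)\<bar>)"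
    using B by (intro sum_mono mult_right_mono) auto
  also have "\<dots> = B * (\<Sum>j\<in>{1..n}. \<bar>\<Prod>k\<in>{1..n}-{j}. (t - x k) / (x j - x k)\<bar>)"
    by (simp add: sum_distrib_left)
  also have "\<dots> \<le> B * Lam" using leb[OF t] B0 by (intro mult_left_mono) auto
  finally show ?thesis by (simp add: mult.commute)
qed

lemma I_err:
  fixes r :: "complex poly"
  assumes t: "t \<in> {-1..0}" and dr: "degree r < n"
    and B: "\<And>s. s \<in> {-1..0} \<Longrightarrow> cmod (f s - poly r (of_real s)) \<le> B"
  shows "cmod (Iop f t - f t) \<le> (1 + Lam) * B"
proof -
  have "Iop f t - f t = Iop (\<lambda>s. f s - poly r (of_real s)) t - (f t - poly r (of_real t))"
    using I_diff[of f t "\<lambda>s. poly r (of_real s)"] I_poly[OF dr, of t] by (simp add: algebra_simps)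
  then have "cmod (Iop f t - f t) \<le> cmod (Iop (\<lambda>s. f s - poly r (of_real s)) t) + cmod (f t - poly r (of_real t))"
    by (metis norm_triangle_ineq4)
  also have "\<dots> \<le> Lam * B + B"
    using I_bound[OF t, of "\<lambda>s. f s - poly r (of_real s)" B] B xr t by (intro add_mono) auto
  finally show ?thesis by (simp add: algebra_simps)
qed

end


lemma negk: assumes "0 < (k::real)" "s \<in> {-1..0}" shows "- k * s \<le> k"
proof -
  have "k * (- s) \<le> k * 1" using assms by (intro mult_left_mono) auto
  then show ?thesis by simp
qed

lemma negk_exp: assumes "0 < (k::real)" "s \<in> {-1..0}" shows "exp (- k * s) \<le> exp k"
  using negk[OF assms] by simp

context rnodes
begin

lemma main_est:
  fixes q :: "complex poly" and lam :: complex and R t :: real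
  assumes dq: "degree q \<le> n"
    and col: "\<And>i. i \<in> {1..n} \<Longrightarrow> poly (pderiv q) (of_real (x i)) = lam * poly q (of_real (x i))"
    and lamR: "cmod lam \<le> R"
    and small: "(1 + Lam) * R * exp (2*R+1) / (2 * real n) \<le> 1/4"
    and t: "t \<in> {-1..0}"
  shows "cmod (poly q (of_real t) - poly q 0 * exp (lam * of_real t))
         \<le> 2 * exp (2*R+1) * cmod (poly q 0) * ((1 + Lam) * R * exp R * (R+1)^n / fact n)"
proof -
  define c where "c = poly q 0"
  define \<kappa> where "\<kappa> = 2*R+1"
  have R0: "0 \<le> R" using lamR norm_ge_zero order_trans by blast
  have k0: "\<kappa> > 0" using R0 by (simp add: \<kappa>_def)
  have Lam0: "0 \<le> Lam" by (rule Lam_nonneg)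
  have nR: "real n \<ge> 1" using n1 by simp
  define U where "U = (\<Sum>j\<in>{1..n}. Polynomial.smult (poly q (of_real (x j))) (lpoly {1..n} x j))"
  have dU: "degree U \<le> n - 1"
    unfolding U_def
    by (rule degree_sum_le) (auto intro!: order_trans[OF degree_smult_le] order_trans[OF degree_lpoly])
  have U_I: "poly U (of_real s) = Iop (\<lambda>s. poly q (of_real s)) s" for s
    unfolding U_def Iop_def by (simp add: poly_sum poly_lpoly del: of_real_prod of_real_divide)
  have U_node: "poly U (of_real (x i)) = poly q (of_real (x i))" if i: "i \<in> {1..n}" for i
  proof -
    have "poly U (of_real (x i)) = (\<Sum>j\<in>{1..n}. poly q (of_real (x j)) * (if i = j then 1 else 0))"
      unfolding U_def poly_sum using i xinj by (intro sum.cong refl) (simp add: lpoly_node)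
    also have "\<dots> = poly q (of_real (x i))" using i by (simp add: if_distrib cong: if_cong)
    finally show ?thesis .
  qed
  have pq: "pderiv q = Polynomial.smult lam U"
  proof (rule poly_eqI_degree[where A = "(\<lambda>j. of_real (x j)) ` {1..n}"])
    have inj: "inj_on (\<lambda>j. complex_of_real (x j)) {1..n}"
    proof (rule inj_onI)
      fix a b assume a: "a \<in> {1..n}" and b: "b \<in> {1..n}" and e: "complex_of_real (x a) = complex_of_real (x b)"
      from e have "x a = x b" by (simp only: of_real_eq_iff)
      then show "a = b" using inj_onD[OF xinj _ a b] by blast
    qed
    have cA: "card ((\<lambda>j. complex_of_real (x j)) ` {1..n}) = n"
      using card_image[OF inj] by simp
    show "degree (pderiv q) < card ((\<lambda>j. complex_of_real (x j)) ` {1..n})"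
      unfolding cA degree_pderiv using dq n1 by linarith
    show "degree (Polynomial.smult lam U) < card ((\<lambda>j. complex_of_real (x j)) ` {1..n})"
      unfolding cA using dU n1 degree_smult_le[of lam U] by linarith
    fix z assume "z \<in> (\<lambda>j. complex_of_real (x j)) ` {1..n}"
    then obtain i where i: "i \<in> {1..n}" "z = of_real (x i)" by auto
    have "poly (pderiv q) (of_real (x i)) = lam * poly q (of_real (x i))" by (rule col[OF i(1)])
    also have "\<dots> = lam * poly U (of_real (x i))" using U_node[OF i(1)] by simp
    finally show "poly (pderiv q) z = poly (Polynomial.smult lam U) z" using i(2) by simp
  qed
  have cqU: "of_nat n * coeff q n = lam * coeff U (n - 1)"
  proof -
    have "coeff (pderiv q) (n - 1) = of_nat (Suc (n - 1)) * coeff q (Suc (n - 1))" by (rule coeff_pderiv)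
    moreover have "Suc (n - 1) = n" using n1 by simp
    ultimately have "coeff (pderiv q) (n - 1) = of_nat n * coeff q n" by simp
    then show ?thesis using pq by simp
  qed
  define T where "T = tpoly lam n"
  define \<tau> where "\<tau> = exp R * R ^ n / fact (n - 1)"
  have tay: "cmod (exp (lam * of_real s) - poly T (of_real s)) \<le> \<tau>" if s: "s \<in> {-1..0}" for s
  proof -
    have "cmod (lam * of_real s) \<le> R"
    proof -
      have "cmod (lam * of_real s) = cmod lam * \<bar>s\<bar>" by (simp add: norm_mult)
      also have "\<dots> \<le> R * 1" using s lamR R0 by (intro mult_mono) auto
      finally show ?thesis by simp
    qed
    then show ?thesis unfolding \<tau>_def T_def poly_tpoly using n1 by (intro taylor_exp) auto
  qed
  define d where "d s = poly U (of_real s) - c * exp (lam * of_real s)" for s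
  define w where "w s = cmod (d s) * exp (\<kappa> * s)" for s
  have wcont: "continuous_on {-1..0} w"
    unfolding w_def d_def by (intro continuous_intros)
  obtain t0 where t0: "t0 \<in> {-1..0}" and t0max: "\<And>s. s \<in> {-1..0} \<Longrightarrow> w s \<le> w t0"
    using continuous_attains_sup[OF compact_Icc _ wcont] by auto
  define Mw where "Mw = w t0"
  have Mw0: "0 \<le> Mw" unfolding Mw_def w_def by simp
  have dbw: "cmod (d s) \<le> Mw * exp (- \<kappa> * s)" if s: "s \<in> {-1..0}" for s
  proof -
    have "cmod (d s) = w s * exp (- \<kappa> * s)" unfolding w_def by (simp add: mult.assoc exp_add[symmetric])
    also have "\<dots> \<le> Mw * exp (- \<kappa> * s)" unfolding Mw_def using t0max[OF s] by (intro mult_right_mono) auto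
    finally show ?thesis .
  qed
  have db: "cmod (d s) \<le> Mw * exp \<kappa>" if s: "s \<in> {-1..0}" for s
  proof -
    have "exp (- \<kappa> * s) \<le> exp \<kappa>" using negk_exp[OF k0 s] .
    then have "Mw * exp (- \<kappa> * s) \<le> Mw * exp \<kappa>" using Mw0 by (rule mult_left_mono)
    then show ?thesis using dbw[OF s] by linarith
  qed
  define E where "E s = poly q (of_real s) - c * exp (lam * of_real s)" for s
  have Ed: "(E has_vector_derivative lam * d s) (at s)" for s
  proof -
    have "((\<lambda>z. poly q z - c * exp (lam * z)) has_field_derivative
            poly (pderiv q) (of_real s) - c * (exp (lam * of_real s) * lam)) (at (of_real s))"
      by (auto intro!: derivative_eq_intros poly_DERIV)
    then have "((\<lambda>s. poly q (of_real s) - c * exp (lam * of_real s)) has_vector_derivative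
            poly (pderiv q) (of_real s) - c * (exp (lam * of_real s) * lam)) (at s)"
      by (rule has_vector_derivative_real_field)
    moreover have "poly (pderiv q) (of_real s) - c * (exp (lam * of_real s) * lam) = lam * d s"
      unfolding pq d_def by (simp add: algebra_simps)
    ultimately show ?thesis unfolding E_def by simp
  qed
  have E0: "E 0 = 0" unfolding E_def c_def by simp
  have Eb: "cmod (E s) \<le> R * Mw / \<kappa> * exp (- \<kappa> * s)" if s: "s \<in> {-1..0}" for s
  proof (rule weighted_int[where f = E and f' = "\<lambda>s. lam * d s" and A = "R * Mw"])
    show "E 0 = 0" by (rule E0)
    show "0 < \<kappa>" by (rule k0)
    show "s \<in> {-1..0}" by (rule s)
  next
    fix s :: real assume s: "s \<in> {-1..0}"
    show "(E has_vector_derivative lam * d s) (at s)" by (rule Ed)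
  next
    fix s :: real assume s: "s \<in> {-1..0}"
    have "cmod (lam * d s) = cmod lam * cmod (d s)" by (simp add: norm_mult)
    also have "\<dots> \<le> R * (Mw * exp (- \<kappa> * s))" using lamR dbw[OF s] R0 by (intro mult_mono) auto
    finally show "cmod (lam * d s) \<le> R * Mw * exp (- \<kappa> * s)" by (simp add: mult.assoc)
  qed
  obtain M :: "complex poly" where dM: "degree M = n" and cM: "coeff M n = 1"
    and Mb: "\<And>s. s \<in> {-1..0} \<Longrightarrow> cmod (poly M (of_real s)) \<le> 1 / 2 ^ (2*n - 1)"
    using cheb_monic_exists[OF n1] by blast
  define h :: real where "h = 1 / 2 ^ (2*n - 1)"
  have h0: "0 \<le> h" "h \<le> 1" unfolding h_def by auto
  have h4: "4 ^ (n - 1) * h = 1/2"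
  proof -
    obtain m where m: "n = Suc m" using n1 by (cases n) auto
    have "(2::real) ^ (2*n - 1) = 2 * 2 ^ (2*m)" using m by simp
    also have "(2::real) ^ (2*m) = 4 ^ m" by (simp add: power_mult)
    finally show ?thesis unfolding h_def using m by simp
  qed
  define cq where "cq = cmod (coeff q n)"
  define cu where "cu = cmod (coeff U (n - 1))"
  define C where "C = cmod c"
  have C0: "0 \<le> C" "0 \<le> cq" "0 \<le> cu" unfolding C_def cq_def cu_def by auto
  have gb: "cmod (poly U (of_real s) - poly q (of_real s)) \<le> (1 + Lam) * (cq * h)" if s: "s \<in> {-1..0}" for s
  proof -
    define r where "r = q - Polynomial.smult (coeff q n) M"
    have dr: "degree r < n"
    proof -
      have d1: "degree r \<le> n" unfolding r_def using dq dM degree_smult_le[of "coeff q n" M]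
        by (intro degree_diff_le) auto
      have c1: "coeff r n = 0" unfolding r_def using cM by simp
      show ?thesis
      proof (rule ccontr)
        assume "\<not> degree r < n"
        then have "degree r = n" using d1 by simp
        then have "r = 0" using c1 by (metis leading_coeff_0_iff)
        then show False using \<open>degree r = n\<close> n1 by simp
      qed
    qed
    have "cmod (Iop (\<lambda>s. poly q (of_real s)) s - poly q (of_real s)) \<le> (1 + Lam) * (cq * h)"
    proof (rule I_err[OF s dr])
      fix s' :: real assume s': "s' \<in> {-1..0}"
      have "poly q (of_real s') - poly r (of_real s') = coeff q n * poly M (of_real s')"
        unfolding r_def by simp
      then have "cmod (poly q (of_real s') - poly r (of_real s')) = cq * cmod (poly M (of_real s'))"
        unfolding cq_def by (simp add: norm_mult)
      also have "\<dots> \<le> cq * h" unfolding h_def using Mb[OF s'] C0 by (intro mult_left_mono) auto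
      finally show "cmod (poly q (of_real s') - poly r (of_real s')) \<le> cq * h" .
    qed
    then show ?thesis using U_I by simp
  qed
  have lb: "cmod (coeff (U - Polynomial.smult c T) (n - 1)) \<le> 4 ^ (n - 1) * (Mw * exp \<kappa> + C * \<tau>)"
  proof (rule lead_bound[OF n1])
    show "degree (U - Polynomial.smult c T) \<le> n - 1"
      using dU degree_tpoly[of lam n] degree_smult_le[of c T] unfolding T_def
      by (intro degree_diff_le) auto
    show "\<forall>s\<in>{-1..0}. cmod (poly (U - Polynomial.smult c T) (of_real s)) \<le> Mw * exp \<kappa> + C * \<tau>"
    proof
      fix s :: real assume s: "s \<in> {-1..0}"
      have "poly (U - Polynomial.smult c T) (of_real s) = d s + c * (exp (lam * of_real s) - poly T (of_real s))"
        unfolding d_def by (simp add: algebra_simps)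
      moreover have "cmod (d s + c * (exp (lam * of_real s) - poly T (of_real s))) \<le> cmod (d s) + cmod (c * (exp (lam * of_real s) - poly T (of_real s)))"
        by (rule norm_triangle_ineq)
      moreover have "cmod (c * (exp (lam * of_real s) - poly T (of_real s))) = C * cmod (exp (lam * of_real s) - poly T (of_real s))"
        unfolding C_def by (simp add: norm_mult)
      ultimately have "cmod (poly (U - Polynomial.smult c T) (of_real s)) \<le> cmod (d s) + C * cmod (exp (lam * of_real s) - poly T (of_real s))"
        by simp
      also have "\<dots> \<le> Mw * exp \<kappa> + C * \<tau>" using db[OF s] tay[OF s] C0 by (intro add_mono mult_left_mono) auto
      finally show "cmod (poly (U - Polynomial.smult c T) (of_real s)) \<le> Mw * exp \<kappa> + C * \<tau>" .
    qed
  qed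
  have s1: "cu \<le> 4 ^ (n - 1) * (Mw * exp \<kappa> + C * \<tau>) + C * R ^ (n - 1) / fact (n - 1)"
  proof -
    have "coeff (U - Polynomial.smult c T) (n - 1) = coeff U (n - 1) - c * (lam ^ (n - 1) / fact (n - 1))"
      unfolding T_def using coeff_tpoly[OF n1] by simp
    then have "coeff U (n - 1) = coeff (U - Polynomial.smult c T) (n - 1) + c * (lam ^ (n - 1) / fact (n - 1))" by simp
    moreover have "cmod (coeff (U - Polynomial.smult c T) (n - 1) + c * (lam ^ (n - 1) / fact (n - 1)))
        \<le> cmod (coeff (U - Polynomial.smult c T) (n - 1)) + cmod (c * (lam ^ (n - 1) / fact (n - 1)))"
      by (rule norm_triangle_ineq)
    moreover have "cmod (c * (lam ^ (n - 1) / fact (n - 1))) = C * (cmod lam ^ (n - 1) / fact (n - 1))"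
      unfolding C_def by (simp add: norm_mult norm_divide norm_power)
    ultimately have "cu \<le> cmod (coeff (U - Polynomial.smult c T) (n - 1)) + C * (cmod lam ^ (n - 1) / fact (n - 1))"
      unfolding cu_def by simp
    also have "\<dots> \<le> 4 ^ (n - 1) * (Mw * exp \<kappa> + C * \<tau>) + C * (R ^ (n - 1) / fact (n - 1))"
      using lb lamR C0 by (intro add_mono mult_left_mono divide_right_mono power_mono) auto
    finally show ?thesis by simp
  qed
  have s2: "real n * cq \<le> R * cu"
  proof -
    have "real n * cq = cmod (of_nat n * coeff q n)" unfolding cq_def by (simp add: norm_mult)
    also have "\<dots> = cmod lam * cu" unfolding cqU cu_def by (simp add: norm_mult)
    also have "\<dots> \<le> R * cu" using lamR C0 by (intro mult_right_mono) auto
    finally show ?thesis .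
  qed
  define \<beta> where "\<beta> = (1 + Lam) * R * (\<tau> / 2 + R ^ (n - 1) / fact (n - 1)) / real n"
  have gb2: "(1 + Lam) * (cq * h) \<le> Mw / 4 + C * \<beta>"
  proof -
    have cqb: "cq \<le> R * cu / real n" using s2 nR by (simp add: field_simps)
    have "(1 + Lam) * (cq * h) \<le> (1 + Lam) * ((R * cu / real n) * h)"
      using cqb h0 Lam0 by (intro mult_left_mono mult_right_mono) auto
    also have "\<dots> \<le> (1 + Lam) * ((R * (4 ^ (n - 1) * (Mw * exp \<kappa> + C * \<tau>) + C * R ^ (n - 1) / fact (n - 1)) / real n) * h)"
      using s1 h0 Lam0 R0 nR by (intro mult_left_mono mult_right_mono divide_right_mono) auto
    also have "\<dots> = (1 + Lam) * R / real n * ((4 ^ (n - 1) * h) * (Mw * exp \<kappa> + C * \<tau>) + h * (C * R ^ (n - 1) / fact (n - 1)))"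
      by (simp add: field_simps)
    also have "\<dots> \<le> (1 + Lam) * R / real n * ((1/2) * (Mw * exp \<kappa> + C * \<tau>) + 1 * (C * R ^ (n - 1) / fact (n - 1)))"
      unfolding h4 using h0 C0 R0 Lam0 Mw0 by (intro mult_left_mono add_mono mult_right_mono) auto
    also have "\<dots> = ((1 + Lam) * R * exp \<kappa> / (2 * real n)) * Mw + C * \<beta>"
      unfolding \<beta>_def using nR by (simp add: field_simps)
    also have "\<dots> \<le> (1/4) * Mw + C * \<beta>"
      using small Mw0 unfolding \<kappa>_def by (intro add_mono[OF _ order_refl] mult_right_mono) auto
    finally show ?thesis by simp
  qed
  have key: "Mw \<le> Mw / 2 + Mw / 4 + C * \<beta>"
  proof -
    have dt0: "d t0 = E t0 + (poly U (of_real t0) - poly q (of_real t0))"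
      unfolding d_def E_def by simp
    have "cmod (d t0) \<le> cmod (E t0) + (1 + Lam) * (cq * h)"
    proof -
      have "cmod (d t0) = cmod (E t0 + (poly U (of_real t0) - poly q (of_real t0)))" using dt0 by simp
      then show ?thesis
        using gb[OF t0] norm_triangle_ineq[of "E t0" "poly U (of_real t0) - poly q (of_real t0)"] by linarith
    qed
    then have "Mw \<le> (cmod (E t0) + (1 + Lam) * (cq * h)) * exp (\<kappa> * t0)"
      unfolding Mw_def w_def by (intro mult_right_mono) auto
    also have "\<dots> = cmod (E t0) * exp (\<kappa> * t0) + (1 + Lam) * (cq * h) * exp (\<kappa> * t0)"
      by (simp add: algebra_simps)
    also have "\<dots> \<le> R * Mw / \<kappa> + (1 + Lam) * (cq * h) * 1"
    proof (rule add_mono)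
      have "cmod (E t0) * exp (\<kappa> * t0) \<le> R * Mw / \<kappa> * exp (- \<kappa> * t0) * exp (\<kappa> * t0)"
        using Eb[OF t0] by (intro mult_right_mono) auto
      also have "\<dots> = R * Mw / \<kappa>" by (simp add: mult.assoc exp_add[symmetric])
      finally show "cmod (E t0) * exp (\<kappa> * t0) \<le> R * Mw / \<kappa>" .
      have "exp (\<kappa> * t0) \<le> 1" using t0 k0 by (simp add: mult_nonneg_nonpos)
      then show "(1 + Lam) * (cq * h) * exp (\<kappa> * t0) \<le> (1 + Lam) * (cq * h) * 1"
        using C0 h0 Lam0 by (intro mult_left_mono) auto
    qed
    also have "R * Mw / \<kappa> \<le> Mw / 2"
    proof -
      have "R * Mw / \<kappa> = (R / \<kappa>) * Mw" by simp
      also have "\<dots> \<le> (1/2) * Mw" using Mw0 k0 R0 unfolding \<kappa>_def by (intro mult_right_mono) (auto simp: field_simps)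
      finally show ?thesis by simp
    qed
    finally show ?thesis using gb2 by linarith
  qed
  then have MwB: "Mw \<le> 4 * C * \<beta>" by linarith
  have "cmod (E t) \<le> R * Mw / \<kappa> * exp (- \<kappa> * t)" by (rule Eb[OF t])
  also have "\<dots> \<le> (1/2) * Mw * exp \<kappa>"
  proof (rule mult_mono)
    show "R * Mw / \<kappa> \<le> 1/2 * Mw"
    proof -
      have "R * Mw / \<kappa> = (R / \<kappa>) * Mw" by simp
      also have "\<dots> \<le> (1/2) * Mw" using Mw0 k0 R0 unfolding \<kappa>_def by (intro mult_right_mono) (auto simp: field_simps)
      finally show ?thesis by simp
    qed
    show "exp (- \<kappa> * t) \<le> exp \<kappa>" using negk_exp[OF k0 t] .
  qed (use Mw0 in auto)
  also have "\<dots> \<le> (1/2) * (4 * C * \<beta>) * exp \<kappa>" using MwB by (intro mult_right_mono) auto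
  also have "\<dots> = 2 * exp \<kappa> * C * \<beta>" by simp
  also have "\<dots> \<le> 2 * exp \<kappa> * C * ((1 + Lam) * R * exp R * (R+1)^n / fact n)"
  proof (rule mult_left_mono)
    have pw: "R ^ n + R ^ (n - 1) \<le> (R + 1) ^ n"
    proof -
      obtain m where m: "n = Suc m" using n1 by (cases n) auto
      have "R ^ m \<le> (R + 1) ^ m" using R0 by (intro power_mono) auto
      then have "(R + 1) * R ^ m \<le> (R + 1) * (R + 1) ^ m" using R0 by (intro mult_left_mono) auto
      then show ?thesis using m by (simp add: algebra_simps)
    qed
    have fn: "fact n = real n * fact (n - 1)" by (rule fact_reduce) (use n1 in simp)
    have "\<tau> / 2 + R ^ (n - 1) / fact (n - 1) \<le> exp R * (R ^ n + R ^ (n - 1)) / fact (n - 1)"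
    proof -
      have \<tau>0: "0 \<le> \<tau>" unfolding \<tau>_def using R0 by simp
      have "\<tau> / 2 \<le> \<tau>" using \<tau>0 by simp
      then have "\<tau> / 2 \<le> exp R * R ^ n / fact (n - 1)" unfolding \<tau>_def .
      moreover have "R ^ (n - 1) / fact (n - 1) \<le> exp R * R ^ (n - 1) / fact (n - 1)"
      proof (rule divide_right_mono)
        have "1 * R ^ (n - 1) \<le> exp R * R ^ (n - 1)" using R0 by (intro mult_right_mono) auto
        then show "R ^ (n - 1) \<le> exp R * R ^ (n - 1)" by simp
      qed simp
      moreover have "exp R * (R ^ n + R ^ (n - 1)) / fact (n - 1) = exp R * R ^ n / fact (n - 1) + exp R * R ^ (n - 1) / fact (n - 1)"
        by (simp add: distrib_left add_divide_distrib)
      ultimately show ?thesis by linarith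
    qed
    also have "\<dots> \<le> exp R * (R + 1) ^ n / fact (n - 1)"
      using pw by (intro divide_right_mono mult_left_mono) auto
    finally have "\<tau> / 2 + R ^ (n - 1) / fact (n - 1) \<le> exp R * (R + 1) ^ n / fact (n - 1)" .
    then have "(1 + Lam) * R * (\<tau> / 2 + R ^ (n - 1) / fact (n - 1)) / real n
         \<le> (1 + Lam) * R * (exp R * (R + 1) ^ n / fact (n - 1)) / real n"
      using Lam0 R0 nR by (intro divide_right_mono mult_left_mono) auto
    also have "\<dots> = (1 + Lam) * R * exp R * (R+1)^n / fact n" unfolding fn by (simp add: field_simps)
    finally show "\<beta> \<le> (1 + Lam) * R * exp R * (R+1)^n / fact n" unfolding \<beta>_def .
    show "0 \<le> 2 * exp \<kappa> * C" using C0 by simp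
  qed
  finally show ?thesis unfolding E_def C_def c_def \<kappa>_def .
qed

end


lemma sum_1n_shift: "(\<Sum>j\<in>{1..n}. f j) = (\<Sum>j<n. f (Suc j)) " for f :: "nat \<Rightarrow> 'a::comm_monoid_add"
  using sum.atLeast1_atMost_eq[of f n] by simp

lemma inj_imp_inverse:
  fixes A :: "nat \<Rightarrow> nat \<Rightarrow> complex"
  assumes inj: "\<And>y. (\<forall>i\<in>{1..n}. (\<Sum>j\<in>{1..n}. A i j * y j) = 0) \<Longrightarrow> (\<forall>j\<in>{1..n}. y j = 0)"
  shows "\<exists>E. is_inverse n A E"
proof -
  define A' where "A' = Matrix.mat n n (\<lambda>(i,j). A (Suc i) (Suc j))"
  have cA: "A' \<in> carrier_mat n n" unfolding A'_def by simp
  have "Determinant.det A' \<noteq> 0"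
  proof
    assume "Determinant.det A' = 0"
    then obtain v where v: "v \<in> carrier_vec n" "v \<noteq> 0\<^sub>v n" "A' *\<^sub>v v = 0\<^sub>v n"
      using det_0_iff_vec_prod_zero_field[OF cA] by blast
    define y where "y j = (if j \<in> {1..n} then v $ (j - 1) else 0)" for j
    have "\<forall>i\<in>{1..n}. (\<Sum>j\<in>{1..n}. A i j * y j) = 0"
    proof
      fix i assume i: "i \<in> {1..n}"
      have "(A' *\<^sub>v v) $ (i - 1) = 0" using v(3) i by auto
      moreover have "(A' *\<^sub>v v) $ (i - 1) = (\<Sum>j<n. A i (Suc j) * v $ j)"
      proof -
        have i1: "i - 1 < n" "Suc (i - 1) = i" using i by auto
        show ?thesis using v(1) i1 unfolding A'_def
          by (simp add: mult_mat_vec_def scalar_prod_def atLeast0LessThan)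
      qed
      moreover have "(\<Sum>j\<in>{1..n}. A i j * y j) = (\<Sum>j<n. A i (Suc j) * v $ j)"
        unfolding sum_1n_shift y_def by simp
      ultimately show "(\<Sum>j\<in>{1..n}. A i j * y j) = 0" by simp
    qed
    then have y0: "\<forall>j\<in>{1..n}. y j = 0" by (rule inj)
    have "v = 0\<^sub>v n"
    proof (rule eq_vecI)
      fix j assume "j < dim_vec (0\<^sub>v n :: complex vec)"
      then have j: "j < n" by simp
      have "y (Suc j) = 0" using y0 j by auto
      then show "v $ j = 0\<^sub>v n $ j" using j unfolding y_def by simp
    qed (use v(1) in simp)
    then show False using v(2) by simp
  qed
  then have "A' \<in> Units (ring_mat TYPE(complex) n ())" by (rule det_non_zero_imp_unit[OF cA])
  then obtain B where B: "B \<in> carrier_mat n n" "B * A' = 1\<^sub>m n" "A' * B = 1\<^sub>m n"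
    unfolding Units_def ring_mat_def by auto
  define E where "E i k = B $$ (i - 1, k - 1)" for i k
  have "is_inverse n A E"
    unfolding is_inverse_def
  proof (intro ballI conjI)
    fix i k assume i: "i \<in> {1..n}" and k: "k \<in> {1..n}"
    have ik: "i - 1 < n" "k - 1 < n" "Suc (i - 1) = i" using i k by auto
    have "(\<Sum>j\<in>{1..n}. A i j * E j k) = (A' * B) $$ (i - 1, k - 1)"
      using ik B(1) unfolding sum_1n_shift E_def A'_def
      by (simp add: scalar_prod_def atLeast0LessThan)
    also have "\<dots> = (if i = k then 1 else 0)" using B(3) i k by auto
    finally show "(\<Sum>j\<in>{1..n}. A i j * E j k) = (if i = k then 1 else 0)" .
    have ik2: "Suc (k - 1) = k" using k by auto
    have "(\<Sum>j\<in>{1..n}. E i j * A j k) = (B * A') $$ (i - 1, k - 1)"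
      using ik ik2 B(1) unfolding sum_1n_shift E_def A'_def
      by (simp add: scalar_prod_def atLeast0LessThan)
    also have "\<dots> = (if i = k then 1 else 0)" using B(2) i k by auto
    finally show "(\<Sum>j\<in>{1..n}. E i j * A j k) = (if i = k then 1 else 0)" .
  qed
  then show ?thesis by blast
qed



definition ofr :: "real poly \<Rightarrow> complex poly" where "ofr p = map_poly complex_of_real p"

lemma poly_ofr: "poly (ofr p) (of_real t) = of_real (poly p t)"
  unfolding ofr_def by (induction p) (auto simp: map_poly_pCons)

lemma pderiv_ofr: "pderiv (ofr p) = ofr (pderiv p)"
  unfolding ofr_def by (rule poly_eqI) (simp add: coeff_map_poly coeff_pderiv)

lemma degree_ofr: "degree (ofr p) \<le> degree p"
  unfolding ofr_def by (simp add: degree_map_poly)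

lemma mesh_lt:
  assumes "is_mesh_family th" "i < j" "j \<le> n"
  shows "th n j < th n i"
  using assms(2,3)
proof (induction j)
  case 0 then show ?case by simp
next
  case (Suc j)
  have s: "th n (Suc j) < th n j" using assms(1) Suc.prems unfolding is_mesh_family_def by auto
  show ?case
  proof (cases "i = j")
    case True then show ?thesis using s by simp
  next
    case False
    then have "th n j < th n i" using Suc by auto
    then show ?thesis using s by linarith
  qed
qed

lemma mesh_inj:
  assumes "is_mesh_family th"
  shows "inj_on (th n) {0..n}"
proof (rule inj_onI)
  fix a b assume a: "a \<in> {0..n}" and b: "b \<in> {0..n}" and e: "th n a = th n b"
  show "a = b"
  proof (rule ccontr)
    assume "a \<noteq> b"
    then consider "a < b" | "b < a" by linarith
    then show False
    proof cases
      case 1 then show False using mesh_lt[OF assms 1, of n] b e by auto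
    next
      case 2 then show False using mesh_lt[OF assms 2, of n] a e by auto
    qed
  qed
qed

lemma mesh_range:
  assumes "is_mesh_family th" "j \<le> n"
  shows "th n j \<in> {-1..0}"
proof -
  have z: "th n 0 = 0" and l: "-1 \<le> th n n" using assms(1) unfolding is_mesh_family_def by auto
  have "th n j \<le> 0"
    using mesh_lt[OF assms(1), of 0 j n] assms(2) z by (cases "j = 0") auto
  moreover have "th n n \<le> th n j"
    using mesh_lt[OF assms(1), of j n n] assms(2) by (cases "j = n") auto
  ultimately show ?thesis using l by simp
qed

lemma mesh_rnodes:
  assumes "is_mesh_family th" "n \<ge> 1"
  shows "rnodes n (th n) (rlebesgue th n)"
proof
  show "n \<ge> 1" by (rule assms(2))
  show "inj_on (th n) {1..n}" using mesh_inj[OF assms(1), of n] by (rule inj_on_subset) auto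
  fix j assume "j \<in> {1..n}" then show "th n j \<in> {-1..0}" using mesh_range[OF assms(1)] by simp
next
  fix t :: real assume t: "t \<in> {-1..0}"
  define g where "g t = (\<Sum>j\<in>{1..n}. \<bar>\<Prod>k\<in>{1..n}-{j}. (t - th n k) / (th n j - th n k)\<bar>)" for t
  have ne: "th n j - th n k \<noteq> 0" if "j \<in> {1..n}" "k \<in> {1..n}" "j \<noteq> k" for j k
    using inj_onD[OF mesh_inj[OF assms(1), of n], of j k] that by auto
  have "continuous_on {-1..0} g" unfolding g_def by (intro continuous_intros) (use ne in auto)
  then have "bounded (g ` {-1..0})" by (intro compact_imp_bounded compact_continuous_image) auto
  then have bdd: "bdd_above (g ` {-1..0})" by (rule bounded_imp_bdd_above)
  have "g t \<le> (SUP t\<in>{-1..0}. g t)" by (rule cSUP_upper[OF t bdd])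
  also have "(SUP t\<in>{-1..0}. g t) = rlebesgue th n"
    unfolding rlebesgue_def rlagr_def g_def ..
  finally show "(\<Sum>j\<in>{1..n}. \<bar>\<Prod>k\<in>{1..n}-{j}. (t - th n k) / (th n j - th n k)\<bar>) \<le> rlebesgue th n"
    unfolding g_def .
qed



lemma pderiv_sum: "pderiv (sum f S) = (\<Sum>i\<in>S. pderiv (f i))"
  by (induction S rule: infinite_finite_induct) (auto simp: pderiv_add)

definition Lr :: "(nat \<Rightarrow> nat \<Rightarrow> real) \<Rightarrow> nat \<Rightarrow> nat \<Rightarrow> real poly" where
  "Lr th n j = Polynomial.smult (1 / (\<Prod>k\<in>{0..n}-{j}. th n j - th n k)) (\<Prod>k\<in>{0..n}-{j}. [:- th n k, 1:])"

lemma lagr_poly: "lagr th n j = poly (Lr th n j)"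
  by (rule ext) (simp add: Lr_def lagr_def poly_prod prod_dividef)

lemma lagr_lpoly: "poly (lpoly {0..n} (th n) j) (of_real t) = of_real (lagr th n j t)"
  by (simp add: poly_lpoly lagr_def del: of_real_prod of_real_divide)

lemma degree_Lr: assumes jn: "j \<le> n" shows "degree (Lr th n j) \<le> n"
proof -
  have "degree (\<Prod>k\<in>{0..n}-{j}. [:- th n k, 1:]) = (\<Sum>k\<in>{0..n}-{j}. degree [:- th n k, (1::real):])"
    by (rule degree_prod_sum_eq) auto
  also have "\<dots> = card ({0..n}-{j})" by simp
  also have "\<dots> = n" using jn by simp
  finally have h: "degree (\<Prod>k\<in>{0..n}-{j}. [:- th n k, 1:]) \<le> n" by simp
  show ?thesis unfolding Lr_def by (rule order_trans[OF degree_smult_le h])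
qed

lemma lagr_node:
  assumes "is_mesh_family th" "i \<le> n" "j \<le> n"
  shows "lagr th n j (th n i) = (if i = j then 1 else 0)"
proof -
  have "poly (lpoly {0..n} (th n) j) (of_real (th n i)) = (if i = j then 1 else 0)"
    using assms by (intro lpoly_node mesh_inj) auto
  then have "complex_of_real (lagr th n j (th n i)) = (if i = j then 1 else 0)"
    by (simp add: lagr_lpoly)
  then show ?thesis by (cases "i = j") auto
qed

lemma lagr_sum:
  assumes "is_mesh_family th"
  shows "(\<Sum>j\<in>{0..n}. lagr th n j t) = 1"
proof -
  have "(1::complex poly) = (\<Sum>j\<in>{0..n}. Polynomial.smult (poly 1 (of_real (th n j))) (lpoly {0..n} (th n) j))"
    using mesh_inj[OF assms] by (intro lagrange_interp) auto
  then have "poly (1::complex poly) (of_real t) = poly (\<Sum>j\<in>{0..n}. Polynomial.smult (poly 1 (of_real (th n j))) (lpoly {0..n} (th n) j)) (of_real t)"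
    by simp
  then have "1 = (\<Sum>j\<in>{0..n}. complex_of_real (lagr th n j t))"
    by (simp add: poly_sum lagr_lpoly)
  then have "complex_of_real (\<Sum>j\<in>{0..n}. lagr th n j t) = 1" by simp
  then show ?thesis using of_real_eq_1_iff by blast
qed

lemma dlagr: "deriv (lagr th n j) t = poly (pderiv (Lr th n j)) t"
  unfolding lagr_poly by (rule DERIV_imp_deriv[OF poly_DERIV])

lemma dlagr_sum:
  assumes "is_mesh_family th"
  shows "(\<Sum>j\<in>{0..n}. poly (pderiv (Lr th n j)) t) = 0"
proof -
  have d1: "((\<lambda>t. \<Sum>j\<in>{0..n}. poly (Lr th n j) t) has_real_derivative (\<Sum>j\<in>{0..n}. poly (pderiv (Lr th n j)) t)) (at t)"
    by (rule DERIV_sum) (rule poly_DERIV)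
  have "(\<lambda>t. \<Sum>j\<in>{0..n}. poly (Lr th n j) t) = (\<lambda>t. 1)"
    using lagr_sum[OF assms] by (simp add: lagr_poly)
  then have d2: "((\<lambda>t. \<Sum>j\<in>{0..n}. poly (Lr th n j) t) has_real_derivative 0) (at t)"
    by simp
  show ?thesis using DERIV_unique[OF d1 d2] .
qed

lemma Dmat_poly: "Dmat th n i j = of_real (poly (pderiv (Lr th n j)) (th n i))"
  unfolding Dmat_def dlagr ..

definition q0 :: "(nat \<Rightarrow> nat \<Rightarrow> real) \<Rightarrow> nat \<Rightarrow> (nat \<Rightarrow> complex) \<Rightarrow> complex poly" where
  "q0 th n y = (\<Sum>j\<in>{1..n}. Polynomial.smult (y j) (ofr (Lr th n j)))"

lemma poly_q0: "poly (q0 th n y) (of_real t) = (\<Sum>j\<in>{1..n}. y j * of_real (lagr th n j t))"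
  unfolding q0_def by (simp add: poly_sum poly_ofr lagr_poly)

lemma pderiv_q0: "poly (pderiv (q0 th n y)) (of_real (th n i)) = (\<Sum>j\<in>{1..n}. Dmat th n i j * y j)"
  unfolding q0_def by (simp add: pderiv_sum pderiv_smult poly_sum pderiv_ofr poly_ofr Dmat_poly mult.commute)

lemma degree_q0: "degree (q0 th n y) \<le> n"
  unfolding q0_def
  by (rule degree_sum_le) (auto intro!: order_trans[OF degree_smult_le] order_trans[OF degree_ofr] degree_Lr)



lemma per_n:
  fixes th :: "nat \<Rightarrow> nat \<Rightarrow> real" and lam :: complex and R :: real and n :: nat
  assumes mesh: "is_mesh_family th" and n1: "n \<ge> 1" and lamR: "cmod lam \<le> R"
    and small: "(1 + rlebesgue th n) * R * exp (2*R+1) / (2 * real n) \<le> 1/4"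
  shows "invertible_nmat n (DmI th n lam) \<and>
    (\<forall>E. is_inverse n (DmI th n lam) E \<longrightarrow>
       supnorm (err_fun th n lam (yvec th n E)) \<le> 2 * exp (2*R+1) * ((1 + rlebesgue th n) * R * exp R * (R+1)^n / fact n))"
proof -
  interpret rnodes n "th n" "rlebesgue th n" by (rule mesh_rnodes[OF mesh n1])
  define B where "B = 2 * exp (2*R+1) * ((1 + rlebesgue th n) * R * exp R * (R+1)^n / fact n)"
  have est: "cmod (poly q (of_real t) - poly q 0 * exp (lam * of_real t)) \<le> cmod (poly q 0) * B"
    if "degree q \<le> n" "\<And>i. i \<in> {1..n} \<Longrightarrow> poly (pderiv q) (of_real (th n i)) = lam * poly q (of_real (th n i))"
       "t \<in> {-1..0}" for q t
  proof -
    have "cmod (poly q (of_real t) - poly q 0 * exp (lam * of_real t))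
          \<le> 2 * exp (2*R+1) * cmod (poly q 0) * ((1 + rlebesgue th n) * R * exp R * (R+1)^n / fact n)"
      by (rule main_est[OF that(1) that(2) lamR small that(3)])
    then show ?thesis unfolding B_def by (simp add: mult_ac)
  qed
  have z0: "th n 0 = 0" using mesh unfolding is_mesh_family_def by simp
  have nodeval: "poly (q0 th n y) (of_real (th n i)) = y i" if i: "i \<in> {1..n}" for y i
  proof -
    have "poly (q0 th n y) (of_real (th n i)) = (\<Sum>j\<in>{1..n}. y j * (if i = j then 1 else 0))"
      unfolding poly_q0 using i by (intro sum.cong refl) (simp add: lagr_node[OF mesh])
    also have "\<dots> = y i" using i by (simp add: if_distrib cong: if_cong)
    finally show ?thesis .
  qed
  have q0zero: "poly (q0 th n y) 0 = 0" for y
  proof -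
    have "poly (q0 th n y) (of_real (th n 0)) = (\<Sum>j\<in>{1..n}. y j * 0)"
      unfolding poly_q0 by (intro sum.cong refl) (simp add: lagr_node[OF mesh])
    then show ?thesis using z0 by simp
  qed
  have Dsum: "(\<Sum>j\<in>{1..n}. DmI th n lam i j * y j) = (\<Sum>j\<in>{1..n}. Dmat th n i j * y j) - lam * y i"
    if i: "i \<in> {1..n}" for i y
  proof -
    have "(\<Sum>j\<in>{1..n}. DmI th n lam i j * y j) = (\<Sum>j\<in>{1..n}. Dmat th n i j * y j - (if i = j then lam * y j else 0))"
      unfolding DmI_def by (intro sum.cong refl) (simp add: algebra_simps)
    also have "\<dots> = (\<Sum>j\<in>{1..n}. Dmat th n i j * y j) - (\<Sum>j\<in>{1..n}. (if i = j then lam * y j else 0))"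
      by (rule sum_subtractf)
    also have "(\<Sum>j\<in>{1..n}. (if i = j then lam * y j else 0)) = lam * y i" using i by simp
    finally show ?thesis .
  qed
  have inj: "\<forall>j\<in>{1..n}. y j = 0" if hy: "\<forall>i\<in>{1..n}. (\<Sum>j\<in>{1..n}. DmI th n lam i j * y j) = 0" for y
  proof
    fix j assume j: "j \<in> {1..n}"
    have col: "poly (pderiv (q0 th n y)) (of_real (th n i)) = lam * poly (q0 th n y) (of_real (th n i))"
      if i: "i \<in> {1..n}" for i
    proof -
      have "(\<Sum>j\<in>{1..n}. Dmat th n i j * y j) - lam * y i = 0" using hy i Dsum[OF i, of y] by simp
      then show ?thesis unfolding pderiv_q0 nodeval[OF i] by simp
    qed
    have xj: "th n j \<in> {-1..0}" using xr j by simp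
    have "cmod (poly (q0 th n y) (of_real (th n j)) - poly (q0 th n y) 0 * exp (lam * of_real (th n j)))
          \<le> cmod (poly (q0 th n y) 0) * B"
      by (rule est[OF degree_q0 col xj])
    then show "y j = 0" unfolding q0zero nodeval[OF j] by simp
  qed
  have invt: "invertible_nmat n (DmI th n lam)"
    unfolding invertible_nmat_def by (rule inj_imp_inverse) (use inj in blast)
  have bound: "supnorm (err_fun th n lam (yvec th n E)) \<le> B" if E: "is_inverse n (DmI th n lam) E" for E
  proof -
    define y where "y = yvec th n E"
    define b where "b i = (\<Sum>m\<in>{1..n}. Dmat th n i m)" for i
    have solve: "(\<Sum>j\<in>{1..n}. DmI th n lam i j * y j) = b i" if i: "i \<in> {1..n}" for i
    proof -
      have "(\<Sum>j\<in>{1..n}. DmI th n lam i j * y j) = (\<Sum>j\<in>{1..n}. \<Sum>k\<in>{1..n}. DmI th n lam i j * (E j k * b k))"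
        unfolding y_def yvec_def b_def by (simp add: sum_distrib_left)
      also have "\<dots> = (\<Sum>k\<in>{1..n}. (\<Sum>j\<in>{1..n}. DmI th n lam i j * E j k) * b k)"
        by (subst sum.swap) (simp add: sum_distrib_right mult.assoc)
      also have "\<dots> = (\<Sum>k\<in>{1..n}. (if i = k then 1 else 0) * b k)"
        using E i unfolding is_inverse_def by (intro sum.cong refl) auto
      also have "\<dots> = (\<Sum>k\<in>{1..n}. if i = k then b k else 0)" by (intro sum.cong refl) simp
      also have "\<dots> = b i" using i by simp
      finally show ?thesis .
    qed
    define q where "q = ofr (Lr th n 0) + q0 th n y"
    have dq: "degree q \<le> n" unfolding q_def
      by (intro degree_add_le order_trans[OF degree_ofr] degree_Lr degree_q0) simp
    have polyq: "poly q (of_real t) = of_real (lagr th n 0 t) + (\<Sum>j\<in>{1..n}. y j * of_real (lagr th n j t))" for t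
      unfolding q_def by (simp add: poly_ofr poly_q0 lagr_poly)
    have q0v: "poly q 0 = 1"
    proof -
      have "poly q (of_real (th n 0)) = of_real (lagr th n 0 (th n 0)) + poly (q0 th n y) (of_real (th n 0))"
        unfolding q_def by (simp add: poly_ofr lagr_poly)
      then show ?thesis using z0 q0zero lagr_node[OF mesh, of 0 n 0] by simp
    qed
    have col: "poly (pderiv q) (of_real (th n i)) = lam * poly q (of_real (th n i))" if i: "i \<in> {1..n}" for i
    proof -
      have qi: "poly q (of_real (th n i)) = y i"
        using polyq[of "th n i"] nodeval[OF i, of y] poly_q0[of th n y "th n i"] lagr_node[OF mesh, of i n 0] i by simp
      have s0: "(\<Sum>j\<in>{0..n}. poly (pderiv (Lr th n j)) (th n i)) = 0" by (rule dlagr_sum[OF mesh])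
      have "{0..n} = insert 0 {1..n}" by auto
      then have "poly (pderiv (Lr th n 0)) (th n i) + (\<Sum>j\<in>{1..n}. poly (pderiv (Lr th n j)) (th n i)) = 0"
        using s0 by simp
      then have l0: "complex_of_real (poly (pderiv (Lr th n 0)) (th n i)) = - b i"
        unfolding b_def Dmat_poly by (simp add: eq_neg_iff_add_eq_0 flip: of_real_sum of_real_add)
      have "poly (pderiv q) (of_real (th n i)) = complex_of_real (poly (pderiv (Lr th n 0)) (th n i)) + (\<Sum>j\<in>{1..n}. Dmat th n i j * y j)"
        unfolding q_def pderiv_add poly_add pderiv_ofr poly_ofr pderiv_q0 ..
      also have "\<dots> = lam * y i" using l0 solve[OF i] Dsum[OF i, of y] by simp
      finally show ?thesis using qi by simp
    qed
    have pt: "cmod (err_fun th n lam y t) \<le> B" if t: "t \<in> {-1..0}" for t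
    proof -
      have "err_fun th n lam y t = poly q (of_real t) - poly q 0 * exp (lam * of_real t)"
        unfolding err_fun_def polyq q0v by simp
      then show ?thesis using est[OF dq col t] q0v by simp
    qed
    show ?thesis unfolding supnorm_def y_def[symmetric]
      by (rule cSUP_least) (use pt in auto)
  qed
  show ?thesis using invt bound unfolding B_def by blast
qed



lemma pow_fact_le_exp:
  fixes x :: real assumes "0 \<le> x"
  shows "x ^ k / fact k \<le> exp x"
proof -
  have s: "(\<lambda>n. x ^ n /\<^sub>R fact n) sums exp x" by (rule exp_converges)
  have "sum (\<lambda>n. x ^ n /\<^sub>R fact n) {k} \<le> suminf (\<lambda>n. x ^ n /\<^sub>R fact n)"
    by (rule sum_le_suminf) (use s assms in \<open>auto simp: sums_iff\<close>)
  then show ?thesis using s by (simp add: sums_iff divide_inverse mult.commute)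
qed

lemma npow_le_fact: "real n ^ n \<le> fact n * exp (real n)"
proof -
  have "real n ^ n / fact n \<le> exp (real n)" by (rule pow_fact_le_exp) simp
  then show ?thesis by (simp add: divide_le_eq mult.commute)
qed

lemma suc_le_pow2: "real n + 1 \<le> 2 ^ n"
proof -
  have "Suc n \<le> 2 ^ n" using less_exp[of n] by (simp only: Suc_le_eq)
  then have "real (Suc n) \<le> real (2 ^ n)" by (simp only: of_nat_le_iff)
  then show ?thesis by simp
qed

lemma sqrt_le_pow2: "sqrt (real n) \<le> 2 ^ n"
proof -
  have "sqrt (real n) \<le> real n + 1"
  proof (cases "n = 0")
    case False
    have "real n \<le> real n ^ 2" using False by (simp add: power2_eq_square)
    then have "sqrt (real n) \<le> sqrt (real n ^ 2)" by (rule real_sqrt_le_mono)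
    then have "sqrt (real n) \<le> real n" by simp
    then show ?thesis by simp
  qed simp
  then show ?thesis using suc_le_pow2[of n] by linarith
qed

theorem lemma5p1:
  fixes th :: "nat \<Rightarrow> nat \<Rightarrow> real" and U :: "complex set"
  assumes "is_mesh_family th"
    and "(\<lambda>n. rlebesgue th n / real n) \<longlonglongrightarrow> 0"
    and "compact U"
  shows "\<exists>N::nat. \<exists>C::real. C > 0 \<and>
    (\<forall>n\<ge>N. \<forall>lam\<in>U. invertible_nmat n (DmI th n lam) \<and>
       (\<forall>E. is_inverse n (DmI th n lam) E \<longrightarrow>
          supnorm (err_fun th n lam (yvec th n E)) \<le> 1 / sqrt (real n) * (C / real n) ^ n))"
proof -
  obtain R0 where R0: "\<And>z. z \<in> U \<Longrightarrow> cmod z \<le> R0"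
    using compact_imp_bounded[OF assms(3)] unfolding bounded_iff by blast
  define R where "R = max 0 R0"
  have R0': "0 \<le> R" unfolding R_def by simp
  have RU: "cmod z \<le> R" if "z \<in> U" for z using R0[OF that] unfolding R_def by simp
  define K0 where "K0 = R * exp (2*R+1)"
  have K0: "0 \<le> K0" unfolding K0_def using R0' by simp
  define \<epsilon> where "\<epsilon> = 1 / (4 * K0 + 4)"
  have e0: "\<epsilon> > 0" unfolding \<epsilon>_def using K0 by simp
  have eK: "2 * \<epsilon> * K0 \<le> 1/2" unfolding \<epsilon>_def using K0 by (simp add: field_simps)
  have e1: "\<epsilon> \<le> 1" unfolding \<epsilon>_def using K0 by (simp add: field_simps)
  have "eventually (\<lambda>n. rlebesgue th n / real n < \<epsilon>) sequentially"
    using order_tendstoD(2)[OF assms(2) e0] .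
  then obtain N1 where N1: "\<And>n. n \<ge> N1 \<Longrightarrow> rlebesgue th n / real n < \<epsilon>"
    unfolding eventually_sequentially by blast
  define N where "N = max (max N1 1) (nat \<lceil>4 * K0\<rceil>)"
  define K1 where "K1 = 2 * exp (2*R+1) * R * exp R"
  have K1: "0 \<le> K1" unfolding K1_def using R0' by simp
  define C where "C = 4 * exp 1 * (R + 1) * (K1 + 1)"
  have C0: "C > 0" unfolding C_def using R0' K1 by (simp add: add_pos_nonneg)
  show ?thesis
  proof (intro exI conjI allI impI ballI)
    show "C > 0" by (rule C0)
    fix n :: nat and lam assume nN: "n \<ge> N" and lam: "lam \<in> U"
    have n1: "n \<ge> 1" and nN1: "n \<ge> N1" and nK: "real n \<ge> 4 * K0" using nN unfolding N_def by auto
    have nR: "real n \<ge> 1" using n1 by simp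
    define L where "L = rlebesgue th n"
    have L0: "0 \<le> L" unfolding L_def by (rule rnodes.Lam_nonneg[OF mesh_rnodes[OF assms(1) n1]])
    have Ln: "L \<le> \<epsilon> * real n" using N1[OF nN1] nR unfolding L_def by (simp add: divide_less_eq)
    have small: "(1 + L) * R * exp (2*R+1) / (2 * real n) \<le> 1/4"
    proof -
      have "(1 + L) * R * exp (2*R+1) = (1 + L) * K0" unfolding K0_def by simp
      also have "\<dots> \<le> (1 + \<epsilon> * real n) * K0" using Ln K0 by (intro mult_right_mono) auto
      also have "\<dots> = K0 + (\<epsilon> * K0) * real n" by (simp add: algebra_simps)
      also have "\<dots> \<le> real n / 4 + (1/4) * real n" using nK eK nR by (intro add_mono mult_right_mono) auto
      finally have "(1 + L) * R * exp (2*R+1) \<le> real n / 2" by simp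
      then show ?thesis using nR by (simp add: divide_le_eq mult_ac)
    qed
    have pn: "invertible_nmat n (DmI th n lam) \<and>
      (\<forall>E. is_inverse n (DmI th n lam) E \<longrightarrow>
       supnorm (err_fun th n lam (yvec th n E)) \<le> 2 * exp (2*R+1) * ((1 + L) * R * exp R * (R+1)^n / fact n))"
      unfolding L_def by (rule per_n[OF assms(1) n1 RU[OF lam]]) (use small in \<open>simp add: L_def\<close>)
    have Bb: "2 * exp (2*R+1) * ((1 + L) * R * exp R * (R+1)^n / fact n) \<le> 1 / sqrt (real n) * (C / real n) ^ n"
    proof -
      have "\<epsilon> * real n \<le> 1 * real n" using e1 by (intro mult_right_mono) auto
      then have L1: "1 + L \<le> 2 ^ n" using Ln suc_le_pow2[of n] by linarith
      have fpos: "fact n > (0::real)" by simp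
      have sq: "sqrt (real n) > 0" using nR by simp
      have Bdef: "2 * exp (2*R+1) * ((1 + L) * R * exp R * (R+1)^n / fact n) = K1 * (1 + L) * (R+1)^n / fact n"
        unfolding K1_def by (simp add: field_simps)
      have "K1 * (1 + L) * (R+1)^n / fact n * (sqrt (real n) * real n ^ n)
            \<le> K1 * (1 + L) * (R+1)^n / fact n * (sqrt (real n) * (fact n * exp (real n)))"
        using npow_le_fact[of n] K1 R0' L0 nR
        by (intro mult_left_mono divide_nonneg_pos mult_nonneg_nonneg) (auto intro: add_nonneg_nonneg)
      also have "\<dots> = K1 * (1 + L) * sqrt (real n) * ((R+1)^n * exp (real n))"
        using fpos by (simp add: field_simps)
      also have "\<dots> \<le> K1 * 2 ^ n * 2 ^ n * ((R+1)^n * exp (real n))"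
      proof -
        have "0 \<le> 1 + L" using L0 by simp
        then have "(1 + L) * sqrt (real n) \<le> 2 ^ n * 2 ^ n"
          using L1 sqrt_le_pow2[of n] by (intro mult_mono) auto
        then show ?thesis using K1 R0'
          by (simp add: mult.assoc) (intro mult_left_mono; simp)
      qed
      also have "\<dots> = K1 * (4 * exp 1 * (R+1)) ^ n"
      proof -
        have a: "(2::real) ^ n * 2 ^ n = 4 ^ n" by (simp flip: power_mult_distrib)
        have b: "exp (real n) = exp 1 ^ n" using exp_of_nat_mult[of n 1] by simp
        have "K1 * 2 ^ n * 2 ^ n * ((R+1)^n * exp (real n)) = K1 * (((2::real) ^ n * 2 ^ n) * exp 1 ^ n * (R+1)^n)"
          unfolding b by (simp add: mult_ac)
        also have "\<dots> = K1 * (4 * exp 1 * (R+1)) ^ n" unfolding a by (simp add: power_mult_distrib)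
        finally show ?thesis .
      qed
      also have "\<dots> \<le> (K1 + 1) ^ n * (4 * exp 1 * (R+1)) ^ n"
      proof (rule mult_right_mono)
        have "K1 + 1 \<le> (K1 + 1) ^ n" using n1 K1 by (intro self_le_power) auto
        then show "K1 \<le> (K1 + 1) ^ n" by linarith
      qed (use R0' in simp)
      also have "\<dots> = C ^ n" unfolding C_def by (simp add: power_mult_distrib mult_ac)
      finally have main: "K1 * (1 + L) * (R+1)^n / fact n * (sqrt (real n) * real n ^ n) \<le> C ^ n" .
      have "K1 * (1 + L) * (R+1)^n / fact n \<le> C ^ n / (sqrt (real n) * real n ^ n)"
        using main sq nR by (simp add: le_divide_eq)
      also have "\<dots> = 1 / sqrt (real n) * (C / real n) ^ n" by (simp add: power_divide)
      finally show ?thesis unfolding Bdef .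
    qed
    show "invertible_nmat n (DmI th n lam)" using pn by blast
    fix E assume "is_inverse n (DmI th n lam) E"
    then show "supnorm (err_fun th n lam (yvec th n E)) \<le> 1 / sqrt (real n) * (C / real n) ^ n"
      using pn Bb by force
  qed
qed


end
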